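(* Let $n\ge 1$ and let $X_1,\dots,X_n$ be positive random variables that are jointly continuously distributed, such that each $X_k$ has an absolutely continuous distribution function $F_k$. Let $s>0$ and let $t=t(n,s)>0$ be the unique solution of $$\sum_{k=1}^n \int_0^{t} x\, dF_k(x) = s.$$ Let $N(n,s)$ and $S_{A(n,s)}$ be as defined in the context. Then $$\mathrm E(N(n,s)) \le \sum_{k=1}^n F_k(t(n,s)) - \frac{s-\mathrm E(S_{A(n,s)})}{t(n,s)}.$$
   Context: Define a total order on $\{X_1,\dots,X_n\}$ by $X_i\prec X_j$ if either $X_i<X_j$, or $X_i=X_j$ and $i<j$. Let $\pi$ be the unique permutation of $\{1,\dots,n\}$ with $X_{\pi(1)}\prec X_{\pi(2)}\prec\cdots\prec X_{\pi(n)}$. Let $A(n,s)=\{\pi(1),\dots,\pi(k)\}$ where $k$ is the largest integer in $\{0,1,\dots,n\}$ with $X_{\pi(1)}+\cdots+X_{\pi(k)}\le s$ (so $A(n,s)=\emptyset$ if $X_{\pi(1)}>s$). Then $N(n,s)=|A(n,s)|$ is the maximum number of observations among $X_1,\dots,X_n$ whose sum does not exceed $s$, and $S_{A(n,s)}=\sum_{i\in A(n,s)} X_i$. *)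

theory Defs
  imports "HOL-Probability.Probability"
begin

definition abs_cont_on_interval :: "real \<Rightarrow> real \<Rightarrow> (real \<Rightarrow> real) \<Rightarrow> bool" where
  "abs_cont_on_interval a b F \<longleftrightarrow>
     (\<forall>\<epsilon>>0. \<exists>\<delta>>0. \<forall>(m::nat) (l::nat \<Rightarrow> real) (u::nat \<Rightarrow> real).
        (\<forall>i<m. a \<le> l i \<and> l i \<le> u i \<and> u i \<le> b) \<and>
        (\<forall>i<m. \<forall>j<m. i \<noteq> j \<longrightarrow> u i \<le> l j \<or> u j \<le> l i) \<and>
        (\<Sum>i<m. u i - l i) < \<delta>
        \<longrightarrow> (\<Sum>i<m. \<bar>F (u i) - F (l i)\<bar>) < \<epsilon>)"

definition abs_cont_fun :: "(real \<Rightarrow> real) \<Rightarrow> bool" where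
  "abs_cont_fun F \<longleftrightarrow> (\<forall>a b. abs_cont_on_interval a b F)"

definition prec_ord :: "(nat \<Rightarrow> real) \<Rightarrow> nat \<Rightarrow> nat \<Rightarrow> bool" where
  "prec_ord x i j \<longleftrightarrow> x i < x j \<or> (x i = x j \<and> i < j)"

definition sort_perm :: "nat \<Rightarrow> (nat \<Rightarrow> real) \<Rightarrow> nat \<Rightarrow> nat" where
  "sort_perm n x = (THE \<pi>. \<pi> permutes {1..n} \<and>
      (\<forall>i j. 1 \<le> i \<and> i < j \<and> j \<le> n \<longrightarrow> prec_ord x (\<pi> i) (\<pi> j)))"

definition greedy_k :: "nat \<Rightarrow> real \<Rightarrow> (nat \<Rightarrow> real) \<Rightarrow> nat" where
  "greedy_k n s x = (GREATEST k. k \<le> n \<and> (\<Sum>i=1..k. x (sort_perm n x i)) \<le> s)"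

definition greedy_set :: "nat \<Rightarrow> real \<Rightarrow> (nat \<Rightarrow> real) \<Rightarrow> nat set" where
  "greedy_set n s x = sort_perm n x ` {1..greedy_k n s x}"

end

theory Submission imports Defs begin
definition sortedP :: "nat \<Rightarrow> (nat \<Rightarrow> real) \<Rightarrow> (nat \<Rightarrow> nat) \<Rightarrow> bool" where
  "sortedP n x \<pi> \<longleftrightarrow> (\<forall>i j. 1 \<le> i \<and> i < j \<and> j \<le> n \<longrightarrow> prec_ord x (\<pi> i) (\<pi> j))"

lemma perm_in: "\<pi> permutes {1..n} \<Longrightarrow> i \<in> {1..n} \<Longrightarrow> \<pi> i \<in> {1..n}"
  by (rule permutes_in_image[THEN iffD2])

lemma prec_irrefl: "\<not> prec_ord x i i" by (auto simp: prec_ord_def)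
lemma prec_trans: "prec_ord x i j \<Longrightarrow> prec_ord x j k \<Longrightarrow> prec_ord x i k"
  by (auto simp: prec_ord_def)
lemma prec_total: "i \<noteq> j \<Longrightarrow> prec_ord x i j \<or> prec_ord x j i"
  by (auto simp: prec_ord_def)
lemma prec_asym: "prec_ord x i j \<Longrightarrow> \<not> prec_ord x j i"
  by (auto simp: prec_ord_def)

definition rnk :: "nat \<Rightarrow> (nat \<Rightarrow> real) \<Rightarrow> nat \<Rightarrow> nat" where
  "rnk n x i = card {j\<in>{1..n}. prec_ord x j i} + 1"

lemma rnk_less:
  assumes "prec_ord x a b" "a \<in> {1..n}"
  shows "rnk n x a < rnk n x b"
proof -
  have sub: "{j\<in>{1..n}. prec_ord x j a} \<subseteq> {j\<in>{1..n}. prec_ord x j b}"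
    using prec_trans[OF _ assms(1)] by blast
  have a1: "a \<in> {j\<in>{1..n}. prec_ord x j b}" using assms by simp
  have a2: "a \<notin> {j\<in>{1..n}. prec_ord x j a}" using prec_irrefl[of x a] by simp
  have "{j\<in>{1..n}. prec_ord x j a} \<subset> {j\<in>{1..n}. prec_ord x j b}"
    using sub a1 a2 by blast
  then show ?thesis unfolding rnk_def by (simp add: psubset_card_mono)
qed

lemma rnk_range: "i \<in> {1..n} \<Longrightarrow> rnk n x i \<in> {1..n}"
proof -
  assume i: "i \<in> {1..n}"
  have a2: "i \<notin> {j\<in>{1..n}. prec_ord x j i}" using prec_irrefl[of x i] by simp
  have "{j\<in>{1..n}. prec_ord x j i} \<subset> {1..n}" using i a2 by blast
  then have "card {j\<in>{1..n}. prec_ord x j i} < card {1..n}" by (intro psubset_card_mono) simp_all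
  then have "card {j\<in>{1..n}. prec_ord x j i} < n" by simp
  then show ?thesis unfolding rnk_def by auto
qed

lemma rnk_inj: "inj_on (rnk n x) {1..n}"
proof (rule inj_onI)
  fix a b assume ab: "a \<in> {1..n}" "b \<in> {1..n}" "rnk n x a = rnk n x b"
  show "a = b"
  proof (rule ccontr)
    assume "a \<noteq> b"
    then have "prec_ord x a b \<or> prec_ord x b a" by (rule prec_total)
    then show False using rnk_less[of x a b n] rnk_less[of x b a n] ab by auto
  qed
qed

lemma rnk_bij: "bij_betw (rnk n x) {1..n} {1..n}"
proof -
  have "rnk n x ` {1..n} \<subseteq> {1..n}" using rnk_range by auto
  moreover have "card (rnk n x ` {1..n}) = card {1..n}" using rnk_inj card_image by blast
  ultimately have "rnk n x ` {1..n} = {1..n}" by (simp add: card_subset_eq)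
  then show ?thesis using rnk_inj by (simp add: bij_betw_def)
qed

lemma sorted_exists: "\<exists>\<pi>. \<pi> permutes {1..n} \<and> sortedP n x \<pi>"
proof -
  define \<pi> where "\<pi> i = (if i \<in> {1..n} then inv_into {1..n} (rnk n x) i else i)" for i
  have b: "bij_betw (inv_into {1..n} (rnk n x)) {1..n} {1..n}"
    using rnk_bij bij_betw_inv_into by blast
  have "bij_betw \<pi> {1..n} {1..n}"
    using bij_betw_cong[of "{1..n}" "inv_into {1..n} (rnk n x)" \<pi> "{1..n}"] b by (simp add: \<pi>_def)
  then have p: "\<pi> permutes {1..n}" by (rule bij_imp_permutes) (auto simp: \<pi>_def)
  have r: "rnk n x (\<pi> i) = i" if "i \<in> {1..n}" for i
    using that bij_betw_inv_into_right[OF rnk_bij[of n x] that] unfolding \<pi>_def by simp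
  have "sortedP n x \<pi>" unfolding sortedP_def
  proof (intro allI impI)
    fix i j assume ij: "1 \<le> i \<and> i < j \<and> j \<le> n"
    have pi: "\<pi> i \<in> {1..n}" "\<pi> j \<in> {1..n}" using ij perm_in[OF p] by auto
    have "\<pi> i \<noteq> \<pi> j" using ij r[of i] r[of j] by auto
    moreover have "\<not> prec_ord x (\<pi> j) (\<pi> i)"
      using rnk_less[of x "\<pi> j" "\<pi> i" n] pi ij r[of i] r[of j] by auto
    ultimately show "prec_ord x (\<pi> i) (\<pi> j)" using prec_total by blast
  qed
  then show ?thesis using p by blast
qed

lemma sorted_rnk:
  assumes p: "\<pi> permutes {1..n}" and s: "sortedP n x \<pi>" and i: "i \<in> {1..n}"
  shows "rnk n x (\<pi> i) = i"
proof -
  have "{j\<in>{1..n}. prec_ord x j (\<pi> i)} = \<pi> ` {l\<in>{1..n}. l < i}"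
  proof
    show "{j\<in>{1..n}. prec_ord x j (\<pi> i)} \<subseteq> \<pi> ` {l\<in>{1..n}. l < i}"
    proof
      fix j assume j: "j \<in> {j\<in>{1..n}. prec_ord x j (\<pi> i)}"
      have "j \<in> \<pi> ` {1..n}" using permutes_image[OF p] j by simp
      then obtain l where l: "l \<in> {1..n}" "j = \<pi> l" by blast
      have pj: "prec_ord x (\<pi> l) (\<pi> i)" using j l by simp
      have "l < i"
      proof (rule ccontr)
        assume "\<not> l < i"
        then have "l = i \<or> i < l" by auto
        then show False
        proof
          assume "l = i" then show False using pj prec_irrefl by metis
        next
          assume "i < l"
          then have "prec_ord x (\<pi> i) (\<pi> l)" using s i l unfolding sortedP_def by simp
          then show False using pj prec_asym by metis
        qed
      qed
      then show "j \<in> \<pi> ` {l\<in>{1..n}. l < i}" using l by auto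
    qed
    show "\<pi> ` {l\<in>{1..n}. l < i} \<subseteq> {j\<in>{1..n}. prec_ord x j (\<pi> i)}"
      using s i perm_in[OF p] unfolding sortedP_def by auto
  qed
  moreover have "inj_on \<pi> {l\<in>{1..n}. l < i}"
    using p permutes_inj inj_on_subset by (metis top_greatest)
  ultimately have "card {j\<in>{1..n}. prec_ord x j (\<pi> i)} = card {l\<in>{1..n}. l < i}"
    by (simp add: card_image)
  also have "{l\<in>{1..n}. l < i} = {1..<i}" using i by auto
  finally show ?thesis using i unfolding rnk_def by simp
qed

lemma sorted_unique:
  assumes "\<pi> permutes {1..n}" "sortedP n x \<pi>" "\<sigma> permutes {1..n}" "sortedP n x \<sigma>"
  shows "\<pi> = \<sigma>"
proof
  fix i show "\<pi> i = \<sigma> i"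
  proof (cases "i \<in> {1..n}")
    case True
    have "rnk n x (\<pi> i) = rnk n x (\<sigma> i)" using sorted_rnk[OF assms(1,2) True] sorted_rnk[OF assms(3,4) True] by simp
    moreover have "\<pi> i \<in> {1..n}" "\<sigma> i \<in> {1..n}" using perm_in[OF assms(1) True] perm_in[OF assms(3) True] by auto
    ultimately show ?thesis using rnk_inj[of n x] by (auto dest: inj_onD)
  next
    case False then show ?thesis using assms by (simp add: permutes_not_in)
  qed
qed

lemma sort_perm_eq: "sort_perm n x = \<pi> \<longleftrightarrow> \<pi> permutes {1..n} \<and> sortedP n x \<pi>"
proof -
  have ex1: "\<exists>!\<pi>. \<pi> permutes {1..n} \<and> sortedP n x \<pi>"
    using sorted_exists sorted_unique by blast
  have sp: "sort_perm n x = (THE \<pi>. \<pi> permutes {1..n} \<and> sortedP n x \<pi>)"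
    unfolding sort_perm_def sortedP_def by simp
  show ?thesis unfolding sp
  proof
    assume "(THE \<pi>. \<pi> permutes {1..n} \<and> sortedP n x \<pi>) = \<pi>"
    then show "\<pi> permutes {1..n} \<and> sortedP n x \<pi>" using theI'[OF ex1] by simp
  next
    assume "\<pi> permutes {1..n} \<and> sortedP n x \<pi>"
    then show "(THE \<pi>. \<pi> permutes {1..n} \<and> sortedP n x \<pi>) = \<pi>" using the1_equality[OF ex1] by blast
  qed
qed

lemma sort_perm: "sort_perm n x permutes {1..n}" "sortedP n x (sort_perm n x)"
  using sort_perm_eq by blast+

lemma gk_props:
  assumes s: "s \<ge> 0"
  shows "greedy_k n s x \<le> n" "(\<Sum>i=1..greedy_k n s x. x (sort_perm n x i)) \<le> s"
    "\<And>k. greedy_k n s x < k \<Longrightarrow> k \<le> n \<Longrightarrow> (\<Sum>i=1..k. x (sort_perm n x i)) > s"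
proof -
  let ?P = "\<lambda>k. k \<le> n \<and> (\<Sum>i=1..k. x (sort_perm n x i)) \<le> s"
  have P0: "?P 0" using s by simp
  have b: "\<forall>y. ?P y \<longrightarrow> y \<le> n" by simp
  have "?P (greedy_k n s x)" unfolding greedy_k_def by (rule GreatestI_nat[where P="?P" and b=n, OF P0]) auto
  then show "greedy_k n s x \<le> n" "(\<Sum>i=1..greedy_k n s x. x (sort_perm n x i)) \<le> s" by auto
  fix k assume "greedy_k n s x < k" "k \<le> n"
  moreover have "?P k \<Longrightarrow> k \<le> greedy_k n s x" unfolding greedy_k_def
    by (rule Greatest_le_nat) auto
  ultimately have "\<not> ?P k" by linarith
  then show "(\<Sum>i=1..k. x (sort_perm n x i)) > s" using \<open>k \<le> n\<close> by simp
qed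

lemma gk_eq:
  assumes "m \<le> n" "(\<Sum>i=1..m. x (sort_perm n x i)) \<le> s"
    "\<And>k. m < k \<Longrightarrow> k \<le> n \<Longrightarrow> (\<Sum>i=1..k. x (sort_perm n x i)) > s"
  shows "greedy_k n s x = m"
  unfolding greedy_k_def
proof (rule Greatest_equality)
  show "m \<le> n \<and> (\<Sum>i=1..m. x (sort_perm n x i)) \<le> s" using assms by auto
  fix y assume "y \<le> n \<and> (\<Sum>i=1..y. x (sort_perm n x i)) \<le> s"
  then show "y \<le> m" using assms(3)[of y] by (cases "m < y") auto
qed

lemma gs_subset: "greedy_set n s x \<subseteq> {1..n}" if "s \<ge> 0"
proof -
  have "sort_perm n x ` {1..greedy_k n s x} \<subseteq> {1..n}"
  proof (rule image_subsetI)
    fix i assume "i \<in> {1..greedy_k n s x}"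
    then have "i \<in> {1..n}" using gk_props(1)[OF that, of n x] by simp
    then show "sort_perm n x i \<in> {1..n}" by (rule perm_in[OF sort_perm(1)])
  qed
  then show ?thesis unfolding greedy_set_def .
qed

lemma gs_sum: "(\<Sum>i\<in>greedy_set n s x. x i) \<le> s" if "s \<ge> 0"
proof -
  have "inj_on (sort_perm n x) {1..greedy_k n s x}"
    using permutes_inj[OF sort_perm(1)] inj_on_subset by (metis top_greatest)
  then have "(\<Sum>i\<in>greedy_set n s x. x i) = (\<Sum>i=1..greedy_k n s x. x (sort_perm n x i))"
    unfolding greedy_set_def by (simp add: sum.reindex)
  then show ?thesis using gk_props(2)[OF that] by simp
qed

lemma gs_cong:
  assumes xy: "\<And>k. k \<in> {1..n} \<Longrightarrow> x k = y k"
  shows "greedy_set n s x = greedy_set n s y"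
proof -
  have pe: "sort_perm n x = sort_perm n y"
  proof -
    have "sortedP n x (sort_perm n y)" unfolding sortedP_def
    proof (intro allI impI)
      fix i j assume ij: "1 \<le> i \<and> i < j \<and> j \<le> n"
      have "i \<in> {1..n}" "j \<in> {1..n}" using ij by auto
      then have "sort_perm n y i \<in> {1..n}" "sort_perm n y j \<in> {1..n}"
        using perm_in[OF sort_perm(1)[of n y]] by auto
      then have e: "x (sort_perm n y i) = y (sort_perm n y i)" "x (sort_perm n y j) = y (sort_perm n y j)"
        using xy by auto
      have "prec_ord y (sort_perm n y i) (sort_perm n y j)"
        using sort_perm(2)[of n y] ij unfolding sortedP_def by blast
      then show "prec_ord x (sort_perm n y i) (sort_perm n y j)" using e by (simp add: prec_ord_def)
    qed
    then show ?thesis using sort_perm_eq sort_perm(1) by blast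
  qed
  have sums: "(\<Sum>i=1..k. x (sort_perm n x i)) = (\<Sum>i=1..k. y (sort_perm n y i))" if "k \<le> n" for k
    using pe perm_in[OF sort_perm(1)[of n y]] xy that by (intro sum.cong) auto
  have "(\<lambda>k. k \<le> n \<and> (\<Sum>i=1..k. x (sort_perm n x i)) \<le> s) = (\<lambda>k. k \<le> n \<and> (\<Sum>i=1..k. y (sort_perm n y i)) \<le> s)"
    using sums by (intro ext) auto
  then have "greedy_k n s x = greedy_k n s y"
    unfolding greedy_k_def by simp
  then show ?thesis unfolding greedy_set_def pe by simp
qed

lemma gs_char:
  assumes s: "s \<ge> 0"
  shows "greedy_set n s x = B \<longleftrightarrow>
    (\<exists>\<pi>\<in>{\<pi>. \<pi> permutes {1..n}}. \<exists>m\<in>{0..n}. sortedP n x \<pi> \<and> (\<Sum>i=1..m. x (\<pi> i)) \<le> s \<and>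
       (\<forall>k\<in>{m<..n}. (\<Sum>i=1..k. x (\<pi> i)) > s) \<and> \<pi> ` {1..m} = B)"
proof
  assume "greedy_set n s x = B"
  then show "\<exists>\<pi>\<in>{\<pi>. \<pi> permutes {1..n}}. \<exists>m\<in>{0..n}. sortedP n x \<pi> \<and> (\<Sum>i=1..m. x (\<pi> i)) \<le> s \<and>
       (\<forall>k\<in>{m<..n}. (\<Sum>i=1..k. x (\<pi> i)) > s) \<and> \<pi> ` {1..m} = B"
    using sort_perm[of n x] gk_props[OF s, where n=n and x=x] unfolding greedy_set_def
    by (intro bexI[of _ "sort_perm n x"] bexI[of _ "greedy_k n s x"]) auto
next
  assume "\<exists>\<pi>\<in>{\<pi>. \<pi> permutes {1..n}}. \<exists>m\<in>{0..n}. sortedP n x \<pi> \<and> (\<Sum>i=1..m. x (\<pi> i)) \<le> s \<and>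
       (\<forall>k\<in>{m<..n}. (\<Sum>i=1..k. x (\<pi> i)) > s) \<and> \<pi> ` {1..m} = B"
  then obtain \<pi> m where p: "\<pi> permutes {1..n}" and m: "m \<le> n" and so: "sortedP n x \<pi>"
    and s1: "(\<Sum>i=1..m. x (\<pi> i)) \<le> s" and s2: "\<forall>k\<in>{m<..n}. (\<Sum>i=1..k. x (\<pi> i)) > s"
    and B: "\<pi> ` {1..m} = B" by auto
  have sp: "sort_perm n x = \<pi>" using sort_perm_eq p so by blast
  have "greedy_k n s x = m" using m s1 s2 by (intro gk_eq) (auto simp: sp)
  then show "greedy_set n s x = B" unfolding greedy_set_def sp using B by simp
qed

theorem theorem3:
  fixes M :: "'a measure" and X :: "nat \<Rightarrow> 'a \<Rightarrow> real"
    and n :: nat and s t :: real and F :: "nat \<Rightarrow> real \<Rightarrow> real"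
  assumes M: "prob_space M"
    and n: "n \<ge> 1"
    and meas: "\<And>k. k \<in> {1..n} \<Longrightarrow> X k \<in> borel_measurable M"
    and pos: "\<And>k \<omega>. k \<in> {1..n} \<Longrightarrow> \<omega> \<in> space M \<Longrightarrow> X k \<omega> > 0"
    and joint: "absolutely_continuous (PiM {1..n} (\<lambda>_. lborel))
                  (distr M (PiM {1..n} (\<lambda>_. borel)) (\<lambda>\<omega>. \<lambda>i\<in>{1..n}. X i \<omega>))"
    and F_def: "\<And>k x. F k x = measure M {\<omega> \<in> space M. X k \<omega> \<le> x}"
    and F_ac: "\<And>k. k \<in> {1..n} \<Longrightarrow> abs_cont_fun (F k)"
    and s: "s > 0"
    and t: "t > 0"
    and t_sol: "(\<Sum>k=1..n. (LINT x:{0..t}|distr M borel (X k). x)) = s"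
    and t_unique: "\<And>t'. t' > 0 \<Longrightarrow> (\<Sum>k=1..n. (LINT x:{0..t'}|distr M borel (X k). x)) = s \<Longrightarrow> t' = t"
  shows "(\<integral>\<omega>. real (card (greedy_set n s (\<lambda>k. X k \<omega>))) \<partial>M)
           \<le> (\<Sum>k=1..n. F k t)
              - (s - (\<integral>\<omega>. (\<Sum>i\<in>greedy_set n s (\<lambda>k. X k \<omega>). X i \<omega>) \<partial>M)) / t"
proof -
  interpret prob_space M by (rule M)
  have s0: "s \<ge> 0" using s by simp
  define Y where "Y k \<omega> = (if k \<in> {1..n} then X k \<omega> else 0)" for k \<omega>
  have Ym[measurable]: "Y k \<in> borel_measurable M" for k
  proof (cases "k \<in> {1..n}")
    case True
    then have "Y k = X k" by (intro ext) (simp add: Y_def)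
    then show ?thesis using meas[OF True] by simp
  next
    case False
    then have "Y k = (\<lambda>_. 0)" by (intro ext) (auto simp: Y_def)
    then show ?thesis by simp
  qed
  define g where "g \<omega> = greedy_set n s (\<lambda>k. X k \<omega>)" for \<omega>
  have gY: "g \<omega> = greedy_set n s (\<lambda>k. Y k \<omega>)" for \<omega>
    unfolding g_def by (rule gs_cong) (simp add: Y_def)
  have gsub: "g \<omega> \<subseteq> {1..n}" for \<omega> using gs_subset[OF s0] g_def by simp
  have finP[measurable]: "finite {\<pi>. \<pi> permutes {1..n}}"
    by (rule finite_permutations) simp
  have gmeas: "g \<in> M \<rightarrow>\<^sub>M count_space (Pow {1..n})"
  proof (subst measurable_count_space_eq2, simp, intro conjI ballI)
    show "g \<in> space M \<rightarrow> Pow {1..n}" using gsub by auto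
    fix B assume "B \<in> Pow {1..n}"
    have ch: "g \<omega> = B \<longleftrightarrow> (\<exists>\<pi>\<in>{\<pi>. \<pi> permutes {1..n}}. \<exists>m\<in>{0..n}.
        sortedP n (\<lambda>k. Y k \<omega>) \<pi> \<and> (\<Sum>i=1..m. Y (\<pi> i) \<omega>) \<le> s \<and>
       (\<forall>k\<in>{m<..n}. (\<Sum>i=1..k. Y (\<pi> i) \<omega>) > s) \<and> \<pi> ` {1..m} = B)" for \<omega>
      unfolding gY by (rule gs_char[OF s0])
    have "g -` {B} \<inter> space M = {\<omega> \<in> space M. g \<omega> = B}" by auto
    also have "\<dots> = {\<omega> \<in> space M. \<exists>\<pi>\<in>{\<pi>. \<pi> permutes {1..n}}. \<exists>m\<in>{0..n}.
        sortedP n (\<lambda>k. Y k \<omega>) \<pi> \<and> (\<Sum>i=1..m. Y (\<pi> i) \<omega>) \<le> s \<and>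
       (\<forall>k\<in>{m<..n}. (\<Sum>i=1..k. Y (\<pi> i) \<omega>) > s) \<and> \<pi> ` {1..m} = B}"
      unfolding ch by (rule refl)
    also have "\<dots> \<in> sets M"
      unfolding sortedP_def prec_ord_def by measurable
    finally show "g -` {B} \<inter> space M \<in> sets M" .
  qed
  have hmeas: "(\<lambda>\<omega>. h (g \<omega>)) \<in> borel_measurable M" for h :: "nat set \<Rightarrow> real"
    by (rule measurable_compose[OF gmeas]) (simp add: measurable_count_space_eq1)
  define N where "N \<omega> = real (card (g \<omega>))" for \<omega>
  define S where "S \<omega> = (\<Sum>i\<in>g \<omega>. X i \<omega>)" for \<omega>
  have Nm: "N \<in> borel_measurable M" unfolding N_def by (rule hmeas)
  have SS: "S \<omega> = (\<Sum>i\<in>{1..n}. (if i \<in> g \<omega> then 1 else 0) * Y i \<omega>)" for \<omega>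
  proof -
    have "(\<Sum>i\<in>{1..n}. (if i \<in> g \<omega> then 1 else 0) * Y i \<omega>) = (\<Sum>i\<in>{1..n} \<inter> g \<omega>. Y i \<omega>)"
      by (subst sum.inter_restrict) (auto intro!: sum.cong)
    also have "\<dots> = S \<omega>" unfolding S_def using gsub[of \<omega>]
      by (intro sum.cong) (auto simp: Y_def Int_absorb1)
    finally show ?thesis by simp
  qed
  have Sm: "S \<in> borel_measurable M"
    unfolding SS by (intro borel_measurable_sum borel_measurable_times hmeas Ym)
  have Sb: "0 \<le> S \<omega> \<and> S \<omega> \<le> s" if "\<omega> \<in> space M" for \<omega>
  proof
    show "S \<omega> \<le> s" unfolding S_def g_def by (rule gs_sum[OF s0])
    show "0 \<le> S \<omega>" unfolding S_def using gsub[of \<omega>] pos[OF _ that]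
      by (intro sum_nonneg) (meson less_imp_le subsetD)
  qed
  have Ni: "integrable M N"
  proof (rule integrable_const_bound[where B="real n"])
    show "AE x in M. norm (N x) \<le> real n"
      using card_mono[OF _ gsub] by (simp add: N_def)
  qed (rule Nm)
  have Si: "integrable M S"
    by (rule integrable_const_bound[where B=s]) (use Sb Sm in auto)
  define I where "I = (\<lambda>k \<omega>. (indicator {\<omega>\<in>space M. X k \<omega> \<le> t} \<omega> :: real))"
  define T where "T = (\<lambda>k \<omega>. indicator {0..t} (X k \<omega>) * X k \<omega> :: real)"
  have Im: "I k \<in> borel_measurable M" if "k \<in> {1..n}" for k
  proof -
    have "{\<omega>\<in>space M. X k \<omega> \<le> t} \<in> sets M" using meas[OF that] by measurable
    then show ?thesis unfolding I_def by (rule borel_measurable_indicator)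
  qed
  have Tm: "T k \<in> borel_measurable M" if "k \<in> {1..n}" for k
    using meas[OF that] unfolding T_def by measurable
  have Ii: "integrable M (I k)" if "k \<in> {1..n}" for k
  proof (rule integrable_const_bound[where B=1])
    show "AE x in M. norm (I k x) \<le> 1" by (simp add: I_def indicator_def)
  qed (rule Im[OF that])
  have Ti: "integrable M (T k)" if "k \<in> {1..n}" for k
  proof (rule integrable_const_bound[where B=t])
    show "AE x in M. norm (T k x) \<le> t" using t by (simp add: T_def indicator_def)
  qed (rule Tm[OF that])
  have IF: "integral\<^sup>L M (I k) = F k t" for k
  proof -
    have e: "{\<omega>\<in>space M. X k \<omega> \<le> t} \<inter> space M = {\<omega>\<in>space M. X k \<omega> \<le> t}" by auto
    show ?thesis unfolding I_def F_def using e by simp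
  qed
  have TE: "integral\<^sup>L M (T k) = (LINT x:{0..t}|distr M borel (X k). x)" if "k \<in> {1..n}" for k
    unfolding set_lebesgue_integral_def T_def
    by (subst integral_distr[OF meas[OF that]]) (auto simp: mult.commute)
  have pw: "N \<omega> - S \<omega> / t \<le> (\<Sum>k=1..n. I k \<omega> - T k \<omega> / t)" if \<omega>: "\<omega> \<in> space M" for \<omega>
  proof -
    have "N \<omega> - S \<omega> / t = (\<Sum>k\<in>g \<omega>. 1 - X k \<omega> / t)"
      unfolding N_def S_def by (simp add: sum_subtractf sum_divide_distrib)
    also have "\<dots> \<le> (\<Sum>k\<in>g \<omega>. if X k \<omega> \<le> t then 1 - X k \<omega> / t else 0)"
      using t by (intro sum_mono) (auto simp: field_simps)
    also have "\<dots> \<le> (\<Sum>k\<in>{1..n}. if X k \<omega> \<le> t then 1 - X k \<omega> / t else 0)"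
      using t gsub[of \<omega>] by (intro sum_mono2) (auto simp: field_simps)
    also have "\<dots> = (\<Sum>k=1..n. I k \<omega> - T k \<omega> / t)"
      using pos[OF _ \<omega>] \<omega> by (intro sum.cong) (auto simp: I_def T_def indicator_def less_imp_le)
    finally show ?thesis .
  qed
  have "integral\<^sup>L M N - integral\<^sup>L M S / t = integral\<^sup>L M (\<lambda>\<omega>. N \<omega> - S \<omega> / t)"
    using Ni Si by simp
  also have "\<dots> \<le> integral\<^sup>L M (\<lambda>\<omega>. \<Sum>k=1..n. I k \<omega> - T k \<omega> / t)"
  proof (rule integral_mono)
    show "integrable M (\<lambda>\<omega>. N \<omega> - S \<omega> / t)" using Ni Si by simp
    show "integrable M (\<lambda>\<omega>. \<Sum>k=1..n. I k \<omega> - T k \<omega> / t)"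
    proof -
      have "integrable M (\<lambda>\<omega>. I k \<omega> - T k \<omega> / t)" if "k \<in> {1..n}" for k
        using Ii[OF that] Ti[OF that] by simp
      then show ?thesis by (rule Bochner_Integration.integrable_sum)
    qed
  qed (rule pw)
  also have "\<dots> = (\<Sum>k=1..n. integral\<^sup>L M (I k) - integral\<^sup>L M (T k) / t)"
  proof -
    have ii: "integrable M (\<lambda>\<omega>. I k \<omega> - T k \<omega> / t)" if "k \<in> {1..n}" for k
      using Ii[OF that] Ti[OF that] by simp
    have "integral\<^sup>L M (\<lambda>\<omega>. \<Sum>k=1..n. I k \<omega> - T k \<omega> / t) = (\<Sum>k=1..n. integral\<^sup>L M (\<lambda>\<omega>. I k \<omega> - T k \<omega> / t))"
      by (rule Bochner_Integration.integral_sum) (rule ii)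
    also have "\<dots> = (\<Sum>k=1..n. integral\<^sup>L M (I k) - integral\<^sup>L M (T k) / t)"
    proof (rule sum.cong[OF refl])
      fix k assume k: "k \<in> {1..n}"
      have "integral\<^sup>L M (\<lambda>\<omega>. I k \<omega> - T k \<omega> / t) = integral\<^sup>L M (I k) - integral\<^sup>L M (\<lambda>\<omega>. T k \<omega> / t)"
        using Ii[OF k] Ti[OF k] by (rule Bochner_Integration.integral_diff[OF _ integrable_divide_zero])
      then show "integral\<^sup>L M (\<lambda>\<omega>. I k \<omega> - T k \<omega> / t) = integral\<^sup>L M (I k) - integral\<^sup>L M (T k) / t"
        by simp
    qed
    finally show ?thesis .
  qed
  also have "\<dots> = (\<Sum>k=1..n. F k t) - (\<Sum>k=1..n. (LINT x:{0..t}|distr M borel (X k). x)) / t"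
    using IF TE by (simp add: sum_subtractf sum_divide_distrib)
  also have "\<dots> = (\<Sum>k=1..n. F k t) - s / t" using t_sol by simp
  finally have main: "integral\<^sup>L M N - integral\<^sup>L M S / t \<le> (\<Sum>k=1..n. F k t) - s / t" .
  show ?thesis using main unfolding N_def S_def g_def by (simp add: diff_divide_distrib)
qed

end
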